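(* For every integer $m\geq 0$, $$\text{(i)}\ A_{1,m}=\frac{m(m+1)(m+\lambda)(m+\lambda+1)}{2\lambda+1};\qquad\text{(ii)}\ \widetilde A_{1,m}=\frac{m(m+\lambda)\big(m^2+\lambda m-\frac12\big)}{2\lambda+1}.$$
   Context: Fix $\lambda>-1/2$. Define polynomials $Q_m$ by $Q_0=1$, $Q_1(\mu)=1-\frac{2(\lambda+1)(\lambda+2)}{2\lambda+1}\mu$ and, for $m\geq2$, $$Q_m-Q_{m-1}=\frac{m(2m-1)(2m+\lambda)}{(m-1+\lambda)(2m-2+\lambda)(2m-1+2\lambda)}\big[Q_{m-1}-Q_{m-2}\big]-\frac{2m(2m-1+\lambda)(2m+\lambda)}{2m-1+2\lambda}\,\mu\,Q_{m-1}(\mu).$$ Define $\widetilde Q_m$ by $\widetilde Q_0=1$, $\widetilde Q_1(\mu)=1-\frac{\lambda+1}{2}\mu$ and, for $m\geq2$, $$\widetilde Q_m-\widetilde Q_{m-1}=\frac{(m-1)(2m-1)(2m-1+\lambda)}{(m-1+\lambda)(2m-3+\lambda)(2m-3+2\lambda)}\big[\widetilde Q_{m-1}-\widetilde Q_{m-2}\big]-\frac{(2m-1)(2m-2+\lambda)(2m-1+\lambda)}{2(m-1+\lambda)}\,\mu\,\widetilde Q_{m-1}(\mu).$$ Write $Q_m(\mu)=\sum_{i=0}^m(-1)^iA_{i,m}\mu^i$ and $\widetilde Q_m(\mu)=\sum_{i=0}^m(-1)^i\widetilde A_{i,m}\mu^i$ (so $A_{0,m}=\widetilde A_{0,m}=1$),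 with $A_{i,m}=\widetilde A_{i,m}=0$ for $i>m$. *)

theory Defs
  imports "HOL-Computational_Algebra.Polynomial"
begin

fun Q :: "real \<Rightarrow> nat \<Rightarrow> real poly" where
  "Q lam 0 = 1"
| "Q lam (Suc 0) = [:1, - (2 * (lam + 1) * (lam + 2) / (2 * lam + 1)):]"
| "Q lam (Suc (Suc n)) =
     (let m = real (n + 2) in
      Q lam (Suc n)
      + smult (m * (2*m - 1) * (2*m + lam) / ((m - 1 + lam) * (2*m - 2 + lam) * (2*m - 1 + 2*lam)))
              (Q lam (Suc n) - Q lam n)
      - smult (2 * m * (2*m - 1 + lam) * (2*m + lam) / (2*m - 1 + 2*lam)) (pCons 0 (Q lam (Suc n))))"

fun Qt :: "real \<Rightarrow> nat \<Rightarrow> real poly" where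
  "Qt lam 0 = 1"
| "Qt lam (Suc 0) = [:1, - ((lam + 1) / 2):]"
| "Qt lam (Suc (Suc n)) =
     (let m = real (n + 2) in
      Qt lam (Suc n)
      + smult ((m - 1) * (2*m - 1) * (2*m - 1 + lam) / ((m - 1 + lam) * (2*m - 3 + lam) * (2*m - 3 + 2*lam)))
              (Qt lam (Suc n) - Qt lam n)
      - smult ((2*m - 1) * (2*m - 2 + lam) * (2*m - 1 + lam) / (2 * (m - 1 + lam))) (pCons 0 (Qt lam (Suc n))))"

text \<open>Q_m(mu) = sum_i (-1)^i A_{i,m} mu^i, so A_{i,m} = (-1)^i coeff (Q_m) i.\<close>
definition A :: "real \<Rightarrow> nat \<Rightarrow> nat \<Rightarrow> real" where
  "A lam i m = (-1) ^ i * coeff (Q lam m) i"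

definition At :: "real \<Rightarrow> nat \<Rightarrow> nat \<Rightarrow> real" where
  "At lam i m = (-1) ^ i * coeff (Qt lam m) i"

end

theory Submission
  imports Defs
begin

definition FQr :: "real \<Rightarrow> real \<Rightarrow> real" where
  "FQr l t = t * (t + 1) * (t + l) * (t + l + 1) / (2 * l + 1)"

definition FTr :: "real \<Rightarrow> real \<Rightarrow> real" where
  "FTr l t = t * (t + l) * (t\<^sup>2 + l * t - 1 / 2) / (2 * l + 1)"

lemma idQ0:
  fixes x l p q r s :: real
  assumes "p \<noteq> 0" "q \<noteq> 0" "r \<noteq> 0" "s \<noteq> 0"
  and "p = x + 1 + l" "q = 2*x+2+l" "r = 2*x+3+2*l" "s = 2*l+1"
  shows "- ((x+1) * (x+2) * (x+1+l) * (x+2+l) / s) + ((x+2) * (2*x+3) * (2*x+4 + l) / (p * q * r))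
        * (- ((x+1) * (x+2) * (x+1+l) * (x+2+l) / s) + (x * (x+1) * (x+l) * (x+1+l) / s))
     - (2 * (x+2) * (2*x+3 + l) * (2*x+4 + l) / r) = - ((x+2) * (x+3) * (x+2+l) * (x+3+l) / s)"
  using assms(1-4) apply (simp add: field_simps)
  unfolding assms(5-8) by (simp add: algebra_simps)

lemma idQ:
  fixes x l :: real
  assumes "x \<ge> 0" "l > -1/2"
  shows "- FQr l (x+1) + ((x+2) * (2*(x+2) - 1) * (2*(x+2) + l) / (((x+2) - 1 + l) * (2*(x+2) - 2 + l) * (2*(x+2) - 1 + 2*l)))
        * (- FQr l (x+1) - - FQr l x)
     - (2 * (x+2) * (2*(x+2) - 1 + l) * (2*(x+2) + l) / (2*(x+2) - 1 + 2*l)) = - FQr l (x+2)"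
proof -
  have a: "x + 1 + l \<noteq> 0" "2*x+2+l \<noteq> 0" "2*x+3+2*l \<noteq> 0" "2*l+1 \<noteq> 0" using assms by linarith+
  have b: "(x+2) - 1 + l = x + 1 + l" "2*(x+2) - 2 + l = 2*x+2+l" "2*(x+2) - 1 + 2*l = 2*x+3+2*l"
    "2*(x+2) - 1 = 2*x+3" "2*(x+2) + l = 2*x+4+l" "2*(x+2) - 1 + l = 2*x+3+l"
    "x+1+1 = x+2" "x+2+1 = x+3" "x+1+l+1 = x+2+l" "x+2+l+1 = x+3+l" "- a - - b = -a + (b::real)"
    for a b by simp_all
  show ?thesis unfolding FQr_def b
    using idQ0[OF a refl refl refl refl] by (simp add: add.assoc add.commute add.left_commute)
qed

lemma idT0:
  fixes x l p q r s :: real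
  assumes "p \<noteq> 0" "q \<noteq> 0" "r \<noteq> 0" "s \<noteq> 0"
  and "p = x + 1 + l" "q = 2*x+1+l" "r = 2*x+1+2*l" "s = 2*l+1"
  shows "- ((x+1) * (x+1+l) * ((x+1)^2 + l*(x+1) - 1/2) / s) + ((x+1) * (2*x+3) * (2*x+3 + l) / (p * q * r))
        * (- ((x+1) * (x+1+l) * ((x+1)^2 + l*(x+1) - 1/2) / s) + (x * (x+l) * (x^2 + l*x - 1/2) / s))
     - ((2*x+3) * (2*x+2 + l) * (2*x+3 + l) / (2 * p)) = - ((x+2) * (x+2+l) * ((x+2)^2 + l*(x+2) - 1/2) / s)"
  using assms(1-4) apply (simp add: field_simps)
  unfolding assms(5-8) by (simp add: algebra_simps power2_eq_square)

lemma idT: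
  fixes x l :: real
  assumes "x \<ge> 0" "l > -1/2"
  shows "- FTr l (x+1) + (((x+2) - 1) * (2*(x+2) - 1) * (2*(x+2) - 1 + l) / (((x+2) - 1 + l) * (2*(x+2) - 3 + l) * (2*(x+2) - 3 + 2*l)))
        * (- FTr l (x+1) - - FTr l x)
     - ((2*(x+2) - 1) * (2*(x+2) - 2 + l) * (2*(x+2) - 1 + l) / (2 * ((x+2) - 1 + l))) = - FTr l (x+2)"
proof -
  have a: "x + 1 + l \<noteq> 0" "2*x+1+l \<noteq> 0" "2*x+1+2*l \<noteq> 0" "2*l+1 \<noteq> 0" using assms by linarith+
  have b: "(x+2) - 1 + l = x + 1 + l" "2*(x+2) - 3 + l = 2*x+1+l" "2*(x+2) - 3 + 2*l = 2*x+1+2*l"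
    "2*(x+2) - 1 = 2*x+3" "2*(x+2) - 2 + l = 2*x+2+l" "2*(x+2) - 1 + l = 2*x+3+l" "(x+2) - 1 = x+1"
    "- a - - b = -a + (b::real)"
    for a b by simp_all
  show ?thesis unfolding FTr_def b
    using idT0[OF a refl refl refl refl] by (simp add: add.assoc add.commute add.left_commute)
qed

lemma Q0: "coeff (Q lam n) 0 = 1"
  by (induction lam n rule: Q.induct) (simp_all add: Let_def)

lemma Qt0: "coeff (Qt lam n) 0 = 1"
  by (induction lam n rule: Qt.induct) (simp_all add: Let_def)

lemma Q1:
  assumes "lam > - 1 / 2"
  shows "coeff (Q lam n) 1 = - FQr lam (real n) \<and> coeff (Q lam (Suc n)) 1 = - FQr lam (real (Suc n))"
proof (induction n)
  case 0
  have "2 * lam + 1 \<noteq> 0" using assms by simp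
  then show ?case by (simp add: FQr_def field_simps)
next
  case (Suc n)
  let ?m = "real n + 2"
  have e: "coeff (Q lam (Suc (Suc n))) 1 = coeff (Q lam (Suc n)) 1
     + (?m * (2*?m - 1) * (2*?m + lam) / ((?m - 1 + lam) * (2*?m - 2 + lam) * (2*?m - 1 + 2*lam)))
        * (coeff (Q lam (Suc n)) 1 - coeff (Q lam n) 1)
     - (2 * ?m * (2*?m - 1 + lam) * (2*?m + lam) / (2*?m - 1 + 2*lam))"
    by (simp add: Let_def Q0 coeff_pCons algebra_simps)
  have r: "real (Suc n) = real n + 1" "real (Suc (Suc n)) = real n + 2" by simp_all
  show ?case using Suc e idQ[OF _ assms, of "real n"] unfolding r by (simp add: Q0 Qt0)
qed

lemma Qt1:
  assumes "lam > - 1 / 2"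
  shows "coeff (Qt lam n) 1 = - FTr lam (real n) \<and> coeff (Qt lam (Suc n)) 1 = - FTr lam (real (Suc n))"
proof (induction n)
  case 0
  have "2 * lam + 1 \<noteq> 0" using assms by simp
  then show ?case by (simp add: FTr_def field_simps power2_eq_square)
next
  case (Suc n)
  let ?m = "real n + 2"
  have e: "coeff (Qt lam (Suc (Suc n))) 1 = coeff (Qt lam (Suc n)) 1
     + ((?m - 1) * (2*?m - 1) * (2*?m - 1 + lam) / ((?m - 1 + lam) * (2*?m - 3 + lam) * (2*?m - 3 + 2*lam)))
        * (coeff (Qt lam (Suc n)) 1 - coeff (Qt lam n) 1)
     - ((2*?m - 1) * (2*?m - 2 + lam) * (2*?m - 1 + lam) / (2 * (?m - 1 + lam)))"
    by (simp add: Let_def Qt0 coeff_pCons algebra_simps)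
  have r: "real (Suc n) = real n + 1" "real (Suc (Suc n)) = real n + 2" by simp_all
  show ?case using Suc e idT[OF _ assms, of "real n"] unfolding r by (simp add: Q0 Qt0)
qed

theorem lemma3p1:
  fixes lam :: real and m :: nat
  assumes "lam > - 1 / 2"
  shows "A lam 1 m = real m * (real m + 1) * (real m + lam) * (real m + lam + 1) / (2 * lam + 1)
       \<and> At lam 1 m = real m * (real m + lam) * ((real m)\<^sup>2 + lam * real m - 1 / 2) / (2 * lam + 1)"
  using Q1[OF assms, of m] Qt1[OF assms, of m]
  by (simp add: A_def At_def FQr_def FTr_def)

end
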